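(* Assume the dynamics are $f(x,u,w)=f_\mathrm{a}(x,u)+w$ with $w\in\mathbb{R}^n$ and disturbance constraint set $\mathcal{W}\subseteq\mathbb{R}^n$, $0\in\mathcal{W}$; the stage cost is $l(x,w;(u,y))=|w|_Q^2+|y-h(x,u)|_R^2$ with $Q,R\succ0$; $\mathcal{X}$, $\mathcal{W}$ and $\mathcal{V}$ are compact; the turnpike property of the context holds; and $f_\mathrm{a}$, $h$ are Lipschitz in $x$ on $\mathcal{X}$ uniformly in $u\in\mathcal{U}$. Then there exist $A>0$ and $\bar\sigma\in\mathcal{L}$ such that for every $\epsilon>0$, every even $N\ge0$, every $\delta\in\{0,\dots,N/2\}$, every $t\ge\delta$, all integers $t_1\le t_2$ in $\{\delta,\dots,t-\delta\}$, and all possible data sequences, $$J_{[t_1,t_2]}(\hat z^{\delta\mathrm{mhe}}_{t_1:t_2})-J_{[t_1,t_2]}(z^\infty_{t_1:t_2})\leq t_\Delta\Big(\epsilon A+\frac{1+\epsilon}{\epsilon}\bar\sigma(\delta)\Big),\qquad t_\Delta=t_2-t_1.$$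
   Context: System: $x_{t+1}=f(x_t,u_t,w_t)$, $y_t=h(x_t,u_t)+v_t$, $f,h$ continuous; known sets $\mathcal{X}\subseteq\mathbb{R}^n$, $\mathcal{U}$, $\mathcal{W}$, $\mathcal{V}\subseteq\mathbb{R}^p$ with $f(\mathcal{X}\times\mathcal{U}\times\mathcal{W})\subseteq\mathcal{X}$. Data $d_t=(u_t,y_t)$; a possible data sequence $(d_t)_{t\in\mathbb{Z}}$ is generated for all $t\in\mathbb{Z}$ by a trajectory with $(x_t,u_t,w_t,v_t)\in\mathcal{X}\times\mathcal{U}\times\mathcal{W}\times\mathcal{V}$. $|x|_Q^2=x^\top Qx$. $P_N(d_{a:a+N})$: minimize $\sum_{j=0}^{N-1}l(\hat x_j,\hat w_j;d_{a+j})+g(\hat x_N;d_{a+N})$ (continuous terminal cost $g\ge0$) subject to $\hat x_{j+1}=f(\hat x_j,u_{a+j},\hat w_j)$, $\hat x_j\in\mathcal{X}$, $\hat w_j\in\mathcal{W}$, $y_{a+j}-h(\hat x_j,u_{a+j})\in\mathcal{V}$; solutions assumed to exist; $\zeta_N(j,d_{a:a+N})=\hat z^*_j$ ($(\hat x^*_j,\hat w^*_j)$ for $j<N$, $(\hat x^*_N,0)$ for $j=N$), with state part $\zeta^x_N$ (index relative to window start). $P_\infty(d_{-\infty:\infty})$: minimize $\sum_{j\in\mathbb{Z}}l(\hat x_j,\hat w_j;d_j)$ under the same constraints for all $j\in\mathbb{Z}$; unique solution $z^\infty_j=(x^\infty_j,w^\infty_j)$ assumed. $\mathcal{L}$: continuous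 non-increasing functions $\mathbb{R}_{\ge0}\to\mathbb{R}_{\ge0}$ tending to $0$; $\mathcal{KL}$: standard. Turnpike property: there is $\beta\in\mathcal{KL}$ with $|\hat z^*_j-z^\infty_{a+j}|\le\beta(|\hat z^*_0-z^\infty_a|,j)+\beta(|\hat z^*_N-z^\infty_{a+N}|,N-j)$ for all $j\in\{0,\dots,N\}$, where $\hat z^*_j=\zeta_N(j,d_{a:a+N})$, for all possible data, $N\ge0$, $a\in\mathbb{Z}$. $\delta$MHE: for even $N$, $\delta\in\{0,\dots,N/2\}$, $t\ge\delta$: $\hat x^{\delta\mathrm{mhe}}_{t-\delta}=\zeta^x_N(N-\delta,d_{t-N:t})$ if $t\ge N$, $=\zeta^x_t(t-\delta,d_{0:t})$ if $\delta\le t\le N-1$. For fixed $t$: $\hat w^{\delta\mathrm{mhe}}_j=\hat x^{\delta\mathrm{mhe}}_{j+1}-f_\mathrm{a}(\hat x^{\delta\mathrm{mhe}}_j,u_j)$, $\hat z^{\delta\mathrm{mhe}}_j=(\hat x^{\delta\mathrm{mhe}}_j,\hat w^{\delta\mathrm{mhe}}_j)$ for $j\in\{\delta,\dots,t-\delta-1\}$, $\hat z^{\delta\mathrm{mhe}}_{t-\delta}=(\hat x^{\delta\mathrm{mhe}}_{t-\delta},0)$. Performance: $J_{[t_1,t_2]}(\hat z_{t_1:t_2})=\sum_{j=t_1}^{t_2-1}l(\hat z_j;d_j)$. *)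

theory Defs
  imports "HOL-Analysis.Analysis"
begin

text \<open>Weighted squared norm |x|_Q^2 = x' Q x.\<close>
definition qnorm2 :: "real^'k^'k \<Rightarrow> real^'k \<Rightarrow> real" where
  "qnorm2 Q x = x \<bullet> (Q *v x)"

text \<open>Positive definite matrix (symmetric, x' Q x > 0 for x \<noteq> 0).\<close>
definition pos_def :: "real^'k^'k \<Rightarrow> bool" where
  "pos_def Q \<longleftrightarrow> transpose Q = Q \<and> (\<forall>x. x \<noteq> 0 \<longrightarrow> qnorm2 Q x > 0)"

text \<open>Stage cost l(x,w;(u,y)) = |w|_Q^2 + |y - h(x,u)|_R^2.\<close>
definition stage_cost ::
  "real^'n^'n \<Rightarrow> real^'p^'p \<Rightarrow> (real^'n \<Rightarrow> real^'m \<Rightarrow> real^'p)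
   \<Rightarrow> (real^'n) \<times> (real^'n) \<Rightarrow> (real^'m) \<times> (real^'p) \<Rightarrow> real" where
  "stage_cost Q R h z d = qnorm2 Q (snd z) + qnorm2 R (snd d - h (fst z) (fst d))"

text \<open>Comparison function classes.\<close>
definition class_K :: "(real \<Rightarrow> real) \<Rightarrow> bool" where
  "class_K \<alpha> \<longleftrightarrow> continuous_on {0..} \<alpha> \<and> \<alpha> 0 = 0 \<and> strict_mono_on {0..} \<alpha>"

definition class_L :: "(real \<Rightarrow> real) \<Rightarrow> bool" where
  "class_L \<sigma> \<longleftrightarrow> continuous_on {0..} \<sigma> \<and> (\<forall>s\<ge>0. \<sigma> s \<ge> 0)
     \<and> (\<forall>s1 s2. 0 \<le> s1 \<longrightarrow> s1 \<le> s2 \<longrightarrow> \<sigma> s2 \<le> \<sigma> s1)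
     \<and> (\<sigma> \<longlongrightarrow> 0) at_top"

definition class_KL :: "(real \<Rightarrow> real \<Rightarrow> real) \<Rightarrow> bool" where
  "class_KL \<beta> \<longleftrightarrow> (\<forall>s\<ge>0. class_K (\<lambda>r. \<beta> r s))
     \<and> (\<forall>r\<ge>0. (\<forall>s1 s2. 0 \<le> s1 \<longrightarrow> s1 \<le> s2 \<longrightarrow> \<beta> r s2 \<le> \<beta> r s1)
               \<and> ((\<lambda>s. \<beta> r s) \<longlongrightarrow> 0) at_top)"

text \<open>Possible data sequences (d_t = (u_t, y_t), t \<in> \<int>) for
  x_{t+1} = f_a(x_t,u_t) + w_t, y_t = h(x_t,u_t) + v_t.\<close>
definition possible_data ::
  "(real^'n) set \<Rightarrow> (real^'m) set \<Rightarrow> (real^'n) set \<Rightarrow> (real^'p) set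
   \<Rightarrow> (real^'n \<Rightarrow> real^'m \<Rightarrow> real^'n) \<Rightarrow> (real^'n \<Rightarrow> real^'m \<Rightarrow> real^'p)
   \<Rightarrow> (int \<Rightarrow> (real^'m) \<times> (real^'p)) \<Rightarrow> bool" where
  "possible_data X U W V fa h d \<longleftrightarrow>
     (\<exists>x w v. \<forall>t. x t \<in> X \<and> fst (d t) \<in> U \<and> w t \<in> W \<and> v t \<in> V
        \<and> x (t + 1) = fa (x t) (fst (d t)) + w t
        \<and> snd (d t) = h (x t) (fst (d t)) + v t)"

text \<open>Feasible set of P_N for window data dw j = d_{a+j}, j = 0..N.\<close>
definition feasible_N ::
  "(real^'n) set \<Rightarrow> (real^'n) set \<Rightarrow> (real^'p) set
   \<Rightarrow> (real^'n \<Rightarrow> real^'m \<Rightarrow> real^'n) \<Rightarrow> (real^'n \<Rightarrow> real^'m \<Rightarrow> real^'p)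
   \<Rightarrow> nat \<Rightarrow> (nat \<Rightarrow> (real^'m) \<times> (real^'p)) \<Rightarrow> (nat \<Rightarrow> (real^'n) \<times> (real^'n)) \<Rightarrow> bool" where
  "feasible_N X W V fa h N dw z \<longleftrightarrow>
     (\<forall>j<N. fst (z (Suc j)) = fa (fst (z j)) (fst (dw j)) + snd (z j))
     \<and> (\<forall>j\<le>N. fst (z j) \<in> X) \<and> (\<forall>j<N. snd (z j) \<in> W)
     \<and> (\<forall>j\<le>N. snd (dw j) - h (fst (z j)) (fst (dw j)) \<in> V)"

text \<open>Cost of P_N.\<close>
definition cost_N ::
  "real^'n^'n \<Rightarrow> real^'p^'p \<Rightarrow> (real^'n \<Rightarrow> real^'m \<Rightarrow> real^'p)
   \<Rightarrow> (real^'n \<Rightarrow> (real^'m) \<times> (real^'p) \<Rightarrow> real)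
   \<Rightarrow> nat \<Rightarrow> (nat \<Rightarrow> (real^'m) \<times> (real^'p)) \<Rightarrow> (nat \<Rightarrow> (real^'n) \<times> (real^'n)) \<Rightarrow> real" where
  "cost_N Q R h g N dw z = (\<Sum>j<N. stage_cost Q R h (z j) (dw j)) + g (fst (z N)) (dw N)"

text \<open>zeta N dw is an optimal solution of P_N(dw), with the last entry (x_N, 0).\<close>
definition optimal_N where
  "optimal_N X W V fa h Q R g N dw z \<longleftrightarrow>
     feasible_N X W V fa h N dw z \<and> snd (z N) = 0 \<and>
     (\<forall>z'. feasible_N X W V fa h N dw z' \<longrightarrow> cost_N Q R h g N dw z \<le> cost_N Q R h g N dw z')"

text \<open>Feasible set and (extended nonnegative) cost of P_\<infinity>.\<close>
definition feasible_inf ::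
  "(real^'n) set \<Rightarrow> (real^'n) set \<Rightarrow> (real^'p) set
   \<Rightarrow> (real^'n \<Rightarrow> real^'m \<Rightarrow> real^'n) \<Rightarrow> (real^'n \<Rightarrow> real^'m \<Rightarrow> real^'p)
   \<Rightarrow> (int \<Rightarrow> (real^'m) \<times> (real^'p)) \<Rightarrow> (int \<Rightarrow> (real^'n) \<times> (real^'n)) \<Rightarrow> bool" where
  "feasible_inf X W V fa h d z \<longleftrightarrow>
     (\<forall>j. fst (z (j + 1)) = fa (fst (z j)) (fst (d j)) + snd (z j)
        \<and> fst (z j) \<in> X \<and> snd (z j) \<in> W
        \<and> snd (d j) - h (fst (z j)) (fst (d j)) \<in> V)"

definition cost_inf ::
  "real^'n^'n \<Rightarrow> real^'p^'p \<Rightarrow> (real^'n \<Rightarrow> real^'m \<Rightarrow> real^'p)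
   \<Rightarrow> (int \<Rightarrow> (real^'m) \<times> (real^'p)) \<Rightarrow> (int \<Rightarrow> (real^'n) \<times> (real^'n)) \<Rightarrow> ennreal" where
  "cost_inf Q R h d z = (\<Sum>\<^sub>\<infinity>j\<in>(UNIV::int set). ennreal (stage_cost Q R h (z j) (d j)))"

text \<open>zinf is the unique solution of P_\<infinity>(d).\<close>
definition unique_opt_inf where
  "unique_opt_inf X W V fa h Q R d z \<longleftrightarrow>
     feasible_inf X W V fa h d z \<and>
     (\<forall>z'. feasible_inf X W V fa h d z' \<longrightarrow> cost_inf Q R h d z \<le> cost_inf Q R h d z')
     \<and> (\<forall>z'. feasible_inf X W V fa h d z' \<longrightarrow> cost_inf Q R h d z' \<le> cost_inf Q R h d z \<longrightarrow> z' = z)"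

text \<open>The window d_{a:a+N} as a function j \<mapsto> d_{a+j}.\<close>
definition window :: "(int \<Rightarrow> 'a) \<Rightarrow> int \<Rightarrow> nat \<Rightarrow> 'a" where
  "window d a = (\<lambda>j. d (a + int j))"

text \<open>delta-MHE state estimate of x_s (s = t - \<delta>), computed at time t = s + \<delta>.\<close>
definition mhe_x where
  "mhe_x zeta N \<delta> d s =
     (if N \<le> s + \<delta> then fst (zeta N (window d (int (s + \<delta>) - int N)) (N - \<delta>))
      else fst (zeta (s + \<delta>) (window d 0) s))"

text \<open>delta-MHE sequence z^{\<delta>mhe}_j for fixed t, j \<in> {\<delta>..t-\<delta>}.\<close>
definition mhe_z where
  "mhe_z fa zeta N \<delta> t d j =
     (if j < t - \<delta>
      then (mhe_x zeta N \<delta> d j, mhe_x zeta N \<delta> d (Suc j) - fa (mhe_x zeta N \<delta> d j) (fst (d (int j))))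
      else (mhe_x zeta N \<delta> d j, 0))"

text \<open>Performance J_{[t1,t2]}.\<close>
definition perf_J where
  "perf_J Q R h d t1 t2 z = (\<Sum>j\<in>{t1..<t2}. stage_cost Q R h (z j) (d j))"

end

theory Submission
  imports Defs
begin

definition pl :: "(nat \<Rightarrow> real) \<Rightarrow> real \<Rightarrow> real" where
  "pl c s = c (nat \<lfloor>s\<rfloor>) + (s - real (nat \<lfloor>s\<rfloor>)) * (c (Suc (nat \<lfloor>s\<rfloor>)) - c (nat \<lfloor>s\<rfloor>))"

lemma pl_nat[simp]: "pl c (real k) = c k"
  by (simp add: pl_def)

lemma pl_on: assumes "real n \<le> s" "s \<le> real n + 1"
  shows "pl c s = c n + (s - real n) * (c (Suc n) - c n)"
proof (cases "s = real n + 1")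
  case True
  then have "s = real (Suc n)" by simp
  then have "pl c s = c (Suc n)" using pl_nat[of c "Suc n"] by simp
  then show ?thesis using True by (simp add: algebra_simps)
next
  case False
  then have "nat \<lfloor>s\<rfloor> = n" using assms by linarith
  then show ?thesis by (simp add: pl_def)
qed

lemma pl_neg: assumes "s < 0" shows "pl c s = c 0 + s * (c (Suc 0) - c 0)"
  using assms by (simp add: pl_def)

lemma pl_cont_upto: "continuous_on {-1..real n} (pl c)"
proof (induction n)
  case 0
  have "continuous_on {-1..0} (\<lambda>s. c 0 + s * (c (Suc 0) - c 0))"
    by (intro continuous_intros)
  moreover have "\<forall>s\<in>{-1..0::real}. c 0 + s * (c (Suc 0) - c 0) = pl c s"
  proof
    fix s :: real assume "s \<in> {-1..0}"
    then show "c 0 + s * (c (Suc 0) - c 0) = pl c s"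
      using pl_neg[of s c] pl_on[of 0 s c] by (cases "s < 0") auto
  qed
  ultimately show ?case using continuous_on_cong[OF refl, of "{-1..0::real}" "\<lambda>s. c 0 + s * (c (Suc 0) - c 0)" "pl c"] by simp
next
  case (Suc n)
  have "continuous_on {real n..real n + 1} (\<lambda>s. c n + (s - real n) * (c (Suc n) - c n))"
    by (intro continuous_intros)
  then have "continuous_on {real n..real n + 1} (pl c)"
    using continuous_on_cong[OF refl, of "{real n..real n + 1}" "pl c"] pl_on[of n _ c] by auto
  then have "continuous_on ({-1..real n} \<union> {real n..real n + 1}) (pl c)"
    using Suc by (intro continuous_on_closed_Un) auto
  moreover have "{-1..real n} \<union> {real n..real n + 1} = {-1..real (Suc n)}" by auto
  ultimately show ?case by simp
qed

lemma pl_isCont: assumes "s \<ge> 0" shows "isCont (pl c) s"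
proof -
  obtain n where n: "s < real n" using reals_Archimedean2 by blast
  have "s \<in> interior {-1..real n}" using assms n by auto
  then show ?thesis using continuous_on_interior[OF pl_cont_upto] by blast
qed

lemma pl_between: assumes "real n \<le> s" "s \<le> real n + 1" "c (Suc n) \<le> c n"
  shows "c (Suc n) \<le> pl c s" "pl c s \<le> c n"
proof -
  have e: "pl c s = c n + (s - real n) * (c (Suc n) - c n)" using pl_on assms by blast
  have "(s - real n) * (c (Suc n) - c n) \<ge> 1 * (c (Suc n) - c n)"
    using assms by (intro mult_right_mono_neg) auto
  then have "(s - real n) * (c (Suc n) - c n) \<ge> c (Suc n) - c n" by simp
  then show "c (Suc n) \<le> pl c s" using e by linarith
  have "(s - real n) * (c (Suc n) - c n) \<le> 0"
    using assms by (intro mult_nonneg_nonpos) auto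
  then show "pl c s \<le> c n" using e by linarith
qed

lemma pl_class_L:
  assumes mono: "\<And>k. c (Suc k) \<le> c k" and nn: "\<And>k. c k \<ge> 0" and lim: "c \<longlonglongrightarrow> 0"
  shows "class_L (pl c)"
proof -
  have antimono: "c m \<le> c k" if "k \<le> m" for k m
    using that by (induction m) (auto intro: order_trans[OF mono] simp: le_Suc_eq)
  have fl: "real (nat \<lfloor>s\<rfloor>) \<le> s" "s \<le> real (nat \<lfloor>s\<rfloor>) + 1" if "s \<ge> 0" for s :: real
    using that by linarith+
  have lo: "c (Suc (nat \<lfloor>s\<rfloor>)) \<le> pl c s" and hi: "pl c s \<le> c (nat \<lfloor>s\<rfloor>)" if "s \<ge> 0" for s
    using pl_between[OF fl[OF that] mono[of "nat \<lfloor>s\<rfloor>"]] by auto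
  have cont: "continuous_on {0..} (pl c)"
    by (intro continuous_at_imp_continuous_on ballI pl_isCont) auto
  have nonneg: "\<forall>s\<ge>0. pl c s \<ge> 0"
  proof (intro allI impI)
    fix s :: real assume "s \<ge> 0" then show "pl c s \<ge> 0" using lo[of s] nn[of "Suc (nat \<lfloor>s\<rfloor>)"] by linarith
  qed
  have dec: "pl c s2 \<le> pl c s1" if "0 \<le> s1" "s1 \<le> s2" for s1 s2
  proof (cases "nat \<lfloor>s1\<rfloor> = nat \<lfloor>s2\<rfloor>")
    case True
    let ?n = "nat \<lfloor>s1\<rfloor>"
    have "pl c s1 = c ?n + (s1 - real ?n) * (c (Suc ?n) - c ?n)"
      using pl_on[OF fl[of s1]] that by blast
    moreover have "pl c s2 = c ?n + (s2 - real ?n) * (c (Suc ?n) - c ?n)"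
      proof -
      have "0 \<le> s2" using that by linarith
      then show ?thesis using pl_on[OF fl[of s2]] True by simp
    qed
    moreover have "(s2 - real ?n) * (c (Suc ?n) - c ?n) \<le> (s1 - real ?n) * (c (Suc ?n) - c ?n)"
      using that mono[of ?n] by (intro mult_right_mono_neg) auto
    ultimately show ?thesis by linarith
  next
    case False
    have "nat \<lfloor>s1\<rfloor> \<le> nat \<lfloor>s2\<rfloor>" by (intro nat_mono floor_mono that(2))
    then have "Suc (nat \<lfloor>s1\<rfloor>) \<le> nat \<lfloor>s2\<rfloor>" using False by linarith
    then have "c (nat \<lfloor>s2\<rfloor>) \<le> c (Suc (nat \<lfloor>s1\<rfloor>))" by (rule antimono)
    then show ?thesis using lo[of s1] hi[of s2] that by linarith
  qed
  have fnat: "filterlim (\<lambda>s::real. nat \<lfloor>s\<rfloor>) sequentially at_top"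
    by (intro filterlim_compose[OF filterlim_nat_sequentially]
          filterlim_compose[OF filterlim_floor_sequentially] filterlim_ident)
  have L1: "((\<lambda>s::real. c (nat \<lfloor>s\<rfloor>)) \<longlongrightarrow> 0) at_top"
    using filterlim_compose[OF lim fnat] by simp
  have L2: "eventually (\<lambda>s. 0 \<le> pl c s) at_top"
    by (rule eventually_at_top_linorderI[of 0]) (use nonneg in auto)
  have L3: "eventually (\<lambda>s. pl c s \<le> c (nat \<lfloor>s\<rfloor>)) at_top"
    by (rule eventually_at_top_linorderI[of 0]) (use hi in auto)
  have "(pl c \<longlongrightarrow> 0) at_top"
    by (rule tendsto_sandwich[OF L2 L3 tendsto_const L1])
  then show ?thesis unfolding class_L_def using cont nonneg dec by simp
qed


lemma qnorm2_sym:
  fixes Q :: "real^'n^'n"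
  assumes "transpose Q = Q"
  shows "b \<bullet> (Q *v c) = c \<bullet> (Q *v b)"
proof -
  have "b \<bullet> (Q *v c) = (b v* Q) \<bullet> c" by (rule dot_lmul_matrix[symmetric])
  also have "b v* Q = Q *v b" using vector_transpose_matrix[of b Q] assms by simp
  finally show ?thesis by (simp add: inner_commute)
qed

lemma qnorm2_nonneg: "pos_def Q \<Longrightarrow> qnorm2 Q x \<ge> 0"
  unfolding pos_def_def by (cases "x = 0") (auto simp: qnorm2_def intro: less_imp_le)

lemma qnorm2_add:
  assumes "transpose Q = Q"
  shows "qnorm2 Q (b + c) = qnorm2 Q b + 2 * (b \<bullet> (Q *v c)) + qnorm2 Q c"
  using qnorm2_sym[OF assms, of b c]
  by (simp add: qnorm2_def matrix_vector_right_distrib inner_add_left inner_add_right)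

lemma qnorm2_eps:
  assumes Q: "pos_def Q" and e: "\<epsilon> > 0"
  shows "qnorm2 Q a - qnorm2 Q b \<le> \<epsilon> * qnorm2 Q b + (1 + \<epsilon>) / \<epsilon> * qnorm2 Q (a - b)"
proof -
  have sym: "transpose Q = Q" using Q by (simp add: pos_def_def)
  define c where "c = a - b"
  have a: "a = b + c" by (simp add: c_def)
  have "0 \<le> qnorm2 Q (\<epsilon> *\<^sub>R b + (- c))" by (rule qnorm2_nonneg[OF Q])
  also have "\<dots> = qnorm2 Q (\<epsilon> *\<^sub>R b) + 2 * ((\<epsilon> *\<^sub>R b) \<bullet> (Q *v (- c))) + qnorm2 Q (- c)"
    by (rule qnorm2_add[OF sym])
  also have "\<dots> = \<epsilon>^2 * qnorm2 Q b - 2 * \<epsilon> * (b \<bullet> (Q *v c)) + qnorm2 Q c"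
    by (simp add: qnorm2_def matrix_vector_mult_scaleR power2_eq_square matrix_vector_mult_diff_distrib[of Q 0 c, simplified])
  finally have h: "2 * \<epsilon> * (b \<bullet> (Q *v c)) \<le> \<epsilon>^2 * qnorm2 Q b + qnorm2 Q c" by linarith
  have h2: "2 * (b \<bullet> (Q *v c)) \<le> \<epsilon> * qnorm2 Q b + qnorm2 Q c / \<epsilon>"
  proof -
    have "\<epsilon> * (2 * (b \<bullet> (Q *v c))) \<le> \<epsilon> * (\<epsilon> * qnorm2 Q b + qnorm2 Q c / \<epsilon>)"
      using h e by (simp add: algebra_simps power2_eq_square)
    then show ?thesis using e by (simp add: mult_le_cancel_left_pos)
  qed
  have "qnorm2 Q a - qnorm2 Q b = 2 * (b \<bullet> (Q *v c)) + qnorm2 Q c"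
    using qnorm2_add[OF sym, of b c] a by simp
  also have "\<dots> \<le> \<epsilon> * qnorm2 Q b + qnorm2 Q c / \<epsilon> + qnorm2 Q c" using h2 by linarith
  also have "\<dots> = \<epsilon> * qnorm2 Q b + (1 + \<epsilon>) / \<epsilon> * qnorm2 Q c"
    using e by (simp add: field_simps)
  finally show ?thesis by (simp add: c_def)
qed

lemma qnorm2_bound: "\<exists>C\<ge>0. \<forall>x. qnorm2 Q x \<le> C * (norm x)^2"
proof -
  obtain K where K: "K > 0" "\<forall>x. norm (Q *v x) \<le> norm x * K"
    using bounded_linear.pos_bounded[OF matrix_vector_mul_bounded_linear[of Q]] by blast
  have "qnorm2 Q x \<le> K * (norm x)^2" for x
  proof -
    have "qnorm2 Q x \<le> norm x * norm (Q *v x)" unfolding qnorm2_def by (rule norm_cauchy_schwarz)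
    also have "\<dots> \<le> norm x * (norm x * K)" using K by (intro mult_left_mono) auto
    finally show ?thesis by (simp add: power2_eq_square algebra_simps)
  qed
  then show ?thesis using K by (intro exI[of _ K]) auto
qed


lemma norm_fst_le2: "norm (fst p) \<le> norm p"
  using norm_fst_le[of "fst p" "snd p"] by simp

lemma qbound_mono:
  assumes "C \<ge> 0" "\<forall>x. qnorm2 Q x \<le> C * (norm x)^2" "norm v \<le> B"
  shows "qnorm2 Q v \<le> C * B^2"
proof -
  have "(norm v)^2 \<le> B^2" by (rule power_mono[OF assms(3) norm_ge_zero])
  then have "C * (norm v)^2 \<le> C * B^2" by (rule mult_left_mono[OF _ assms(1)])
  then show ?thesis using assms(2) order_trans by blast
qed

lemma norm_pair_split: "norm p \<le> norm (fst p) + norm (snd p)"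
  using norm_Pair_le[of "fst p" "snd p"] by simp

theorem corollary1:
  fixes X W :: "(real^'n) set" and U :: "(real^'m) set" and V :: "(real^'p) set"
    and fa :: "real^'n \<Rightarrow> real^'m \<Rightarrow> real^'n"
    and h :: "real^'n \<Rightarrow> real^'m \<Rightarrow> real^'p"
    and Q :: "real^'n^'n" and R :: "real^'p^'p"
    and g :: "real^'n \<Rightarrow> (real^'m) \<times> (real^'p) \<Rightarrow> real"
    and zeta :: "nat \<Rightarrow> (nat \<Rightarrow> (real^'m) \<times> (real^'p)) \<Rightarrow> nat \<Rightarrow> (real^'n) \<times> (real^'n)"
    and zinf :: "(int \<Rightarrow> (real^'m) \<times> (real^'p)) \<Rightarrow> int \<Rightarrow> (real^'n) \<times> (real^'n)"
  assumes cont_fa: "continuous_on (X \<times> U) (\<lambda>(x, u). fa x u)"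
    and cont_h: "continuous_on (X \<times> U) (\<lambda>(x, u). h x u)"
    and invariant: "\<forall>x\<in>X. \<forall>u\<in>U. \<forall>w\<in>W. fa x u + w \<in> X"
    and W0: "0 \<in> W"
    and compX: "compact X" and compW: "compact W" and compV: "compact V"
    and Qpd: "pos_def Q" and Rpd: "pos_def R"
    and g_nonneg: "\<forall>x d. g x d \<ge> 0"
    and g_cont: "\<forall>d. continuous_on UNIV (\<lambda>x. g x d)"
    and zeta_opt: "\<forall>d N a. possible_data X U W V fa h d \<longrightarrow>
                     optimal_N X W V fa h Q R g N (window d a) (zeta N (window d a))"
    and zinf_opt: "\<forall>d. possible_data X U W V fa h d \<longrightarrow> unique_opt_inf X W V fa h Q R d (zinf d)"
    and turnpike: "\<exists>\<beta>. class_KL \<beta> \<and>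
       (\<forall>d N a j. possible_data X U W V fa h d \<longrightarrow> j \<le> N \<longrightarrow>
          norm (zeta N (window d a) j - zinf d (a + int j))
            \<le> \<beta> (norm (zeta N (window d a) 0 - zinf d a)) (real j)
             + \<beta> (norm (zeta N (window d a) N - zinf d (a + int N))) (real (N - j)))"
    and lip_fa: "\<exists>L. \<forall>u\<in>U. L-lipschitz_on X (\<lambda>x. fa x u)"
    and lip_h: "\<exists>L. \<forall>u\<in>U. L-lipschitz_on X (\<lambda>x. h x u)"
  shows "\<exists>A > 0. \<exists>\<sigma>. class_L \<sigma> \<and>
    (\<forall>\<epsilon>>0. \<forall>N \<delta> t t1 t2 d. even N \<longrightarrow> \<delta> \<le> N div 2 \<longrightarrow> \<delta> \<le> t \<longrightarrow>
        \<delta> \<le> t1 \<longrightarrow> t1 \<le> t2 \<longrightarrow> t2 \<le> t - \<delta> \<longrightarrow> possible_data X U W V fa h d \<longrightarrow>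
        perf_J Q R h (\<lambda>j. d (int j)) t1 t2 (mhe_z fa zeta N \<delta> t d)
          - perf_J Q R h (\<lambda>j. d (int j)) t1 t2 (\<lambda>j. zinf d (int j))
        \<le> real (t2 - t1) * (\<epsilon> * A + (1 + \<epsilon>) / \<epsilon> * \<sigma> (real \<delta>)))"
proof -
  obtain \<beta> where bKL: "class_KL \<beta>" and tp: "\<And>d N a j. possible_data X U W V fa h d \<Longrightarrow> j \<le> N \<Longrightarrow>
          norm (zeta N (window d a) j - zinf d (a + int j))
            \<le> \<beta> (norm (zeta N (window d a) 0 - zinf d a)) (real j)
             + \<beta> (norm (zeta N (window d a) N - zinf d (a + int N))) (real (N - j))"
    using turnpike by blast
  have b1: "\<beta> r s \<le> \<beta> r' s" if "0 \<le> r" "r \<le> r'" "0 \<le> s" for r r' s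
  proof (cases "r = r'")
    case False
    have "strict_mono_on {0..} (\<lambda>r. \<beta> r s)" using bKL that unfolding class_KL_def class_K_def by blast
    moreover have "r < r'" using that False by simp
    ultimately have "\<beta> r s < \<beta> r' s" using that by (intro strict_mono_onD[of "{0..}" "\<lambda>r. \<beta> r s"]) auto
    then show ?thesis by simp
  qed simp
  have b2: "\<beta> r s' \<le> \<beta> r s" if "0 \<le> r" "0 \<le> s" "s \<le> s'" for r s s'
    using bKL that unfolding class_KL_def by blast
  have b0: "\<beta> 0 s = 0" if "0 \<le> s" for s
    using bKL that unfolding class_KL_def class_K_def by blast
  have bnn: "0 \<le> \<beta> r s" if "0 \<le> r" "0 \<le> s" for r s
    using b1[of 0 r s] b0[of s] that by simp
  have blim: "((\<lambda>s. \<beta> r s) \<longlongrightarrow> 0) at_top" if "0 \<le> r" for r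
    using bKL that unfolding class_KL_def by blast
  obtain MX where MX: "MX > 0" "\<forall>x\<in>X. norm x \<le> MX"
    using compact_imp_bounded[OF compX] bounded_pos by blast
  obtain MW where MW: "MW > 0" "\<forall>x\<in>W. norm x \<le> MW"
    using compact_imp_bounded[OF compW] bounded_pos by blast
  obtain MV where MV: "MV > 0" "\<forall>x\<in>V. norm x \<le> MV"
    using compact_imp_bounded[OF compV] bounded_pos by blast
  obtain Lf0 where Lf0: "\<forall>u\<in>U. Lf0-lipschitz_on X (\<lambda>x. fa x u)" using lip_fa by blast
  obtain Lh0 where Lh0: "\<forall>u\<in>U. Lh0-lipschitz_on X (\<lambda>x. h x u)" using lip_h by blast
  define Lf where "Lf = max 0 Lf0"
  define Lh where "Lh = max 0 Lh0"
  have Lfnn: "Lf \<ge> 0" and Lhnn: "Lh \<ge> 0" by (simp_all add: Lf_def Lh_def)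
  have lipf: "norm (fa x u - fa x' u) \<le> Lf * norm (x - x')" if "u \<in> U" "x \<in> X" "x' \<in> X" for x x' u
  proof -
    have "dist (fa x u) (fa x' u) \<le> Lf0 * dist x x'"
      using lipschitz_onD[of Lf0 X "\<lambda>x. fa x u"] Lf0 that by blast
    also have "\<dots> \<le> Lf * dist x x'" unfolding Lf_def by (intro mult_right_mono) auto
    finally show ?thesis by (simp add: dist_norm)
  qed
  have liph: "norm (h x u - h x' u) \<le> Lh * norm (x - x')" if "u \<in> U" "x \<in> X" "x' \<in> X" for x x' u
  proof -
    have "dist (h x u) (h x' u) \<le> Lh0 * dist x x'"
      using lipschitz_onD[of Lh0 X "\<lambda>x. h x u"] Lh0 that by blast
    also have "\<dots> \<le> Lh * dist x x'" unfolding Lh_def by (intro mult_right_mono) auto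
    finally show ?thesis by (simp add: dist_norm)
  qed
  obtain CQ where CQ: "CQ \<ge> 0" "\<forall>x. qnorm2 Q x \<le> CQ * (norm x)^2" using qnorm2_bound by blast
  obtain CR where CR: "CR \<ge> 0" "\<forall>x. qnorm2 R x \<le> CR * (norm x)^2" using qnorm2_bound by blast
  define D where "D = 2 * MX + 2 * MW"
  have Dpos: "D > 0" using MX MW by (simp add: D_def)
  define K where "K = 4 * (CQ * (1 + Lf)^2 + CR * Lh^2)"
  have Knn: "K \<ge> 0" using CQ CR by (simp add: K_def)
  define c where "c = (\<lambda>k::nat. K * (\<beta> D (real k))^2)"
  define \<sigma> where "\<sigma> = pl c"
  define A where "A = CQ * MW^2 + CR * MV^2 + 1"
  have Apos: "A > 0"
  proof -
    have "0 \<le> CQ * MW^2 + CR * MV^2" using CQ(1) CR(1) by simp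
    then show ?thesis unfolding A_def by linarith
  qed
  have sL: "class_L \<sigma>" unfolding \<sigma>_def
  proof (rule pl_class_L)
    fix k
    have "\<beta> D (real (Suc k)) \<le> \<beta> D (real k)" using Dpos by (intro b2) auto
    moreover have "0 \<le> \<beta> D (real (Suc k))" using Dpos by (intro bnn) auto
    ultimately have "(\<beta> D (real (Suc k)))^2 \<le> (\<beta> D (real k))^2" by (intro power_mono)
    then show "c (Suc k) \<le> c k" unfolding c_def using Knn by (intro mult_left_mono)
    show "c k \<ge> 0" unfolding c_def using Knn by simp
  next
    have "(\<lambda>k. \<beta> D (real k)) \<longlonglongrightarrow> 0"
      using filterlim_compose[OF blim[of D] filterlim_real_sequentially] Dpos by simp
    then have "(\<lambda>k. K * (\<beta> D (real k))^2) \<longlonglongrightarrow> K * 0^2" by (intro tendsto_intros)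
    then show "c \<longlonglongrightarrow> 0" by (simp add: c_def)
  qed
  have zfe: "fst (zeta N' (window d a) k) \<in> X \<and> norm (snd (zeta N' (window d a) k)) \<le> MW"
    if "possible_data X U W V fa h d" "k \<le> N'" for d N' a k
  proof -
    have o: "optimal_N X W V fa h Q R g N' (window d a) (zeta N' (window d a))"
      using zeta_opt that by blast
    show ?thesis
    proof (cases "k = N'")
      case True
      then show ?thesis using o MW unfolding optimal_N_def feasible_N_def by auto
    next
      case False
      then have "k < N'" using that by simp
      then show ?thesis using o MW unfolding optimal_N_def feasible_N_def by auto
    qed
  qed
  have zif: "fst (zinf d (i + 1)) = fa (fst (zinf d i)) (fst (d i)) + snd (zinf d i)
        \<and> fst (zinf d i) \<in> X \<and> snd (zinf d i) \<in> W
        \<and> snd (d i) - h (fst (zinf d i)) (fst (d i)) \<in> V"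
    if "possible_data X U W V fa h d" for d i
    using zinf_opt that unfolding unique_opt_inf_def feasible_inf_def by blast
  have dU: "fst (d i) \<in> U" if "possible_data X U W V fa h d" for d i
    using that unfolding possible_data_def by blast
  have zD: "norm (zeta N' (window d a) k - zinf d i) \<le> D"
    if "possible_data X U W V fa h d" "k \<le> N'" for d N' a k i
  proof -
    have "norm (zeta N' (window d a) k - zinf d i) \<le> norm (zeta N' (window d a) k) + norm (zinf d i)"
      by (rule norm_triangle_ineq4)
    also have "\<dots> \<le> (norm (fst (zeta N' (window d a) k)) + norm (snd (zeta N' (window d a) k)))
        + (norm (fst (zinf d i)) + norm (snd (zinf d i)))"
      by (intro add_mono norm_pair_split)
    also have "\<dots> \<le> (MX + MW) + (MX + MW)"
      using zfe[OF that] zif[OF that(1), of i] MX MW by (intro add_mono) auto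
    finally show ?thesis by (simp add: D_def)
  qed
  have tpb: "norm (zeta N' (window d a) j - zinf d (a + int j)) \<le> 2 * \<beta> D (real \<delta>)"
    if "possible_data X U W V fa h d" "j \<le> N'" "\<delta> \<le> j" "\<delta> \<le> N' - j" for d N' a j \<delta>
  proof -
    have "\<beta> (norm (zeta N' (window d a) 0 - zinf d a)) (real j) \<le> \<beta> D (real j)"
      using zD[OF that(1), of 0 N' a a] by (intro b1) auto
    also have "\<dots> \<le> \<beta> D (real \<delta>)" using Dpos that by (intro b2) auto
    finally have 1: "\<beta> (norm (zeta N' (window d a) 0 - zinf d a)) (real j) \<le> \<beta> D (real \<delta>)" .
    have "\<beta> (norm (zeta N' (window d a) N' - zinf d (a + int N'))) (real (N' - j)) \<le> \<beta> D (real (N' - j))"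
      using zD[OF that(1), of N' N' a "a + int N'"] by (intro b1) auto
    also have "\<dots> \<le> \<beta> D (real \<delta>)" using Dpos that by (intro b2) auto
    finally have 2: "\<beta> (norm (zeta N' (window d a) N' - zinf d (a + int N'))) (real (N' - j)) \<le> \<beta> D (real \<delta>)" .
    show ?thesis using tp[OF that(1,2), of a] 1 2 by linarith
  qed
  have main: "perf_J Q R h (\<lambda>j. d (int j)) t1 t2 (mhe_z fa zeta N \<delta> t d)
          - perf_J Q R h (\<lambda>j. d (int j)) t1 t2 (\<lambda>j. zinf d (int j))
        \<le> real (t2 - t1) * (\<epsilon> * A + (1 + \<epsilon>) / \<epsilon> * \<sigma> (real \<delta>))"
    if e: "\<epsilon> > 0" and eN: "even N" and dN: "\<delta> \<le> N div 2" and "\<delta> \<le> t"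
      and d1: "\<delta> \<le> t1" and t12: "t1 \<le> t2" and t2t: "t2 \<le> t - \<delta>"
      and pd: "possible_data X U W V fa h d" for \<epsilon> N \<delta> t t1 t2 d
  proof -
    define bb where "bb = \<beta> D (real \<delta>)"
    have bbnn: "bb \<ge> 0" unfolding bb_def using Dpos by (intro bnn) auto
    have xb: "mhe_x zeta N \<delta> d s \<in> X \<and> norm (mhe_x zeta N \<delta> d s - fst (zinf d (int s))) \<le> 2 * bb"
      if s: "\<delta> \<le> s" for s
    proof (cases "N \<le> s + \<delta>")
      case True
      have e1: "mhe_x zeta N \<delta> d s = fst (zeta N (window d (int (s + \<delta>) - int N)) (N - \<delta>))"
        using True by (simp add: mhe_x_def)
      have dd: "2 * \<delta> \<le> N" using eN dN by auto
      have ai: "int (s + \<delta>) - int N + int (N - \<delta>) = int s" using dd by simp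
      have "norm (zeta N (window d (int (s + \<delta>) - int N)) (N - \<delta>) - zinf d (int s)) \<le> 2 * bb"
      proof -
        have "norm (zeta N (window d (int (s + \<delta>) - int N)) (N - \<delta>) - zinf d (int (s + \<delta>) - int N + int (N - \<delta>))) \<le> 2 * \<beta> D (real \<delta>)"
          by (rule tpb[OF pd]) (use dd in auto)
        then show ?thesis unfolding ai bb_def .
      qed
      then have "norm (fst (zeta N (window d (int (s + \<delta>) - int N)) (N - \<delta>) - zinf d (int s))) \<le> 2 * bb"
        using order_trans[OF norm_fst_le2] by blast
      moreover have "fst (zeta N (window d (int (s + \<delta>) - int N)) (N - \<delta>)) \<in> X"
        using zfe[OF pd, of "N - \<delta>" N] by auto
      ultimately show ?thesis using e1 by simp
    next
      case False
      have e1: "mhe_x zeta N \<delta> d s = fst (zeta (s + \<delta>) (window d 0) s)"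
        using False by (simp add: mhe_x_def)
      have "norm (zeta (s + \<delta>) (window d 0) s - zinf d (int s)) \<le> 2 * bb"
      proof -
        have "norm (zeta (s + \<delta>) (window d 0) s - zinf d (0 + int s)) \<le> 2 * \<beta> D (real \<delta>)"
          by (rule tpb[OF pd]) (use s in auto)
        then show ?thesis unfolding bb_def by simp
      qed
      then have "norm (fst (zeta (s + \<delta>) (window d 0) s - zinf d (int s))) \<le> 2 * bb"
        using order_trans[OF norm_fst_le2] by blast
      moreover have "fst (zeta (s + \<delta>) (window d 0) s) \<in> X"
        using zfe[OF pd, of s "s + \<delta>"] by auto
      ultimately show ?thesis using e1 by simp
    qed
    have step: "stage_cost Q R h (mhe_z fa zeta N \<delta> t d j) (d (int j))
        - stage_cost Q R h (zinf d (int j)) (d (int j)) \<le> \<epsilon> * A + (1 + \<epsilon>) / \<epsilon> * \<sigma> (real \<delta>)"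
      if j: "j \<in> {t1..<t2}" for j
    proof -
      have jd: "\<delta> \<le> j" "j < t - \<delta>" "\<delta> \<le> Suc j" using j d1 t2t by auto
      define u where "u = fst (d (int j))"
      define y where "y = snd (d (int j))"
      have uU: "u \<in> U" unfolding u_def by (rule dU[OF pd])
      define xh where "xh = mhe_x zeta N \<delta> d j"
      define xh' where "xh' = mhe_x zeta N \<delta> d (Suc j)"
      define xi where "xi = fst (zinf d (int j))"
      define wi where "wi = snd (zinf d (int j))"
      define xi' where "xi' = fst (zinf d (int (Suc j)))"
      have xhb: "xh \<in> X" "norm (xh - xi) \<le> 2 * bb" using xb[OF jd(1)] unfolding xh_def xi_def by auto
      have xhb': "xh' \<in> X" "norm (xh' - xi') \<le> 2 * bb" using xb[OF jd(3)] unfolding xh'_def xi'_def by auto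
      have ij: "int j + 1 = int (Suc j)" by simp
      have zi: "xi' = fa xi u + wi" "xi \<in> X" "wi \<in> W" "y - h xi u \<in> V"
        using zif[OF pd, of "int j", unfolded ij] unfolding xi'_def xi_def wi_def u_def y_def by blast+
      have mz: "mhe_z fa zeta N \<delta> t d j = (xh, xh' - fa xh u)"
        using jd unfolding mhe_z_def xh_def xh'_def u_def by simp
      have zz: "zinf d (int j) = (xi, wi)" unfolding xi_def wi_def by simp
      have dj: "d (int j) = (u, y)" unfolding u_def y_def by simp
      define dw where "dw = (xh' - fa xh u) - wi"
      define dr where "dr = (y - h xh u) - (y - h xi u)"
      have dwe: "dw = (xh' - xi') - (fa xh u - fa xi u)" unfolding dw_def zi(1) by (simp add: algebra_simps)
      have "norm dw \<le> norm (xh' - xi') + norm (fa xh u - fa xi u)"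
        unfolding dwe by (rule norm_triangle_ineq4)
      also have "\<dots> \<le> 2 * bb + Lf * (2 * bb)"
        using xhb' lipf[OF uU xhb(1) zi(2)] xhb(2) Lfnn
        by (intro add_mono) (auto intro: order_trans mult_left_mono)
      finally have ndw: "norm dw \<le> (1 + Lf) * (2 * bb)" by (simp add: algebra_simps)
      have dre: "dr = - (h xh u - h xi u)" unfolding dr_def by simp
      have ndr: "norm dr \<le> Lh * (2 * bb)"
        unfolding dre norm_minus_cancel
        using liph[OF uU xhb(1) zi(2)] xhb(2) Lhnn by (auto intro: order_trans mult_left_mono)
      have qdw: "qnorm2 Q dw \<le> CQ * ((1 + Lf) * (2 * bb))^2"
        by (rule qbound_mono[OF CQ ndw])
      have qdr: "qnorm2 R dr \<le> CR * (Lh * (2 * bb))^2"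
        by (rule qbound_mono[OF CR ndr])
      have qwi: "qnorm2 Q wi \<le> CQ * MW^2"
        using MW zi(3) by (intro qbound_mono[OF CQ]) auto
      have qri: "qnorm2 R (y - h xi u) \<le> CR * MV^2"
        using MV zi(4) by (intro qbound_mono[OF CR]) auto
      have "stage_cost Q R h (mhe_z fa zeta N \<delta> t d j) (d (int j))
          - stage_cost Q R h (zinf d (int j)) (d (int j))
          = (qnorm2 Q (xh' - fa xh u) - qnorm2 Q wi) + (qnorm2 R (y - h xh u) - qnorm2 R (y - h xi u))"
        unfolding mz zz dj stage_cost_def by simp
      also have "\<dots> \<le> (\<epsilon> * qnorm2 Q wi + (1 + \<epsilon>) / \<epsilon> * qnorm2 Q dw)
          + (\<epsilon> * qnorm2 R (y - h xi u) + (1 + \<epsilon>) / \<epsilon> * qnorm2 R dr)"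
        unfolding dw_def dr_def by (intro add_mono qnorm2_eps Qpd Rpd e)
      also have "\<dots> = \<epsilon> * (qnorm2 Q wi + qnorm2 R (y - h xi u)) + (1 + \<epsilon>) / \<epsilon> * (qnorm2 Q dw + qnorm2 R dr)"
        by (simp add: algebra_simps)
      also have "\<dots> \<le> \<epsilon> * A + (1 + \<epsilon>) / \<epsilon> * (CQ * ((1 + Lf) * (2 * bb))^2 + CR * (Lh * (2 * bb))^2)"
      proof -
        have 1: "qnorm2 Q wi + qnorm2 R (y - h xi u) \<le> A" using qwi qri unfolding A_def by linarith
        have 2: "qnorm2 Q dw + qnorm2 R dr \<le> CQ * ((1 + Lf) * (2 * bb))^2 + CR * (Lh * (2 * bb))^2"
          using qdw qdr by linarith
        have 3: "\<epsilon> * (qnorm2 Q wi + qnorm2 R (y - h xi u)) \<le> \<epsilon> * A"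
          using mult_left_mono[OF 1] e by simp
        have 4: "(1 + \<epsilon>) / \<epsilon> * (qnorm2 Q dw + qnorm2 R dr) \<le> (1 + \<epsilon>) / \<epsilon> * (CQ * ((1 + Lf) * (2 * bb))^2 + CR * (Lh * (2 * bb))^2)"
          using e by (intro mult_left_mono[OF 2]) simp
        show ?thesis using 3 4 by linarith
      qed
      also have "CQ * ((1 + Lf) * (2 * bb))^2 + CR * (Lh * (2 * bb))^2 = \<sigma> (real \<delta>)"
        unfolding \<sigma>_def pl_nat c_def K_def bb_def by (simp add: algebra_simps power2_eq_square)
      finally show ?thesis .
    qed
    have "perf_J Q R h (\<lambda>j. d (int j)) t1 t2 (mhe_z fa zeta N \<delta> t d)
          - perf_J Q R h (\<lambda>j. d (int j)) t1 t2 (\<lambda>j. zinf d (int j))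
        = (\<Sum>j\<in>{t1..<t2}. stage_cost Q R h (mhe_z fa zeta N \<delta> t d j) (d (int j))
        - stage_cost Q R h (zinf d (int j)) (d (int j)))"
      unfolding perf_J_def by (simp add: sum_subtractf)
    also have "\<dots> \<le> (\<Sum>j\<in>{t1..<t2}. \<epsilon> * A + (1 + \<epsilon>) / \<epsilon> * \<sigma> (real \<delta>))"
      by (rule sum_mono) (rule step)
    also have "\<dots> = real (t2 - t1) * (\<epsilon> * A + (1 + \<epsilon>) / \<epsilon> * \<sigma> (real \<delta>))"
      by simp
    finally show ?thesis .
  qed
  show ?thesis
    apply (rule exI[of _ A])
    apply (rule conjI[OF Apos])
    apply (rule exI[of _ \<sigma>])
    apply (rule conjI[OF sL])
    apply (intro allI impI)
    apply (rule main)
    apply assumption+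
    done
qed

end
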